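(* Let $n\ge1$, $0\le c_0<c_1<\dots<c_n$, $v_0\ge v_1\ge\dots\ge v_n>0$. (1) Let $A=(a_{jk})_{j,k=0}^n$ with $a_{jk}=v_k-c_k$ if $j>k$, $a_{kk}=\frac{v_k}{2}-c_k$, $a_{jk}=-c_j$ if $j<k$. (2) Let $0\le\rho_k<\frac{v_k}{2}$ for $k=0,\dots,n$ and let $B=(b_{jk})_{j,k=0}^n$ with $b_{jk}=v_k-c_k$ if $j>k$, $b_{kk}=\frac{v_k}{2}-c_k-\rho_k$, $b_{jk}=-c_j$ if $j<k$. For each of these pay-off matrices there exists a unique ESS, and the pay-off matrix is conditionally negative definite.
   Context: Strategies are indexed $0,\dots,n$; the set of mixed strategies is $\overline\Delta=\{\mathbf{q}\in[0,1]^{n+1}:\sum_j q_j=1\}$. For a matrix $M$, $\mathbf{p}\in\overline\Delta$ is an ESS for $M$ if (i) $\mathbf{p}^TM\mathbf{p}\ge\mathbf{q}^TM\mathbf{p}$ for all $\mathbf{q}\in\overline\Delta$ and (ii) whenever $\mathbf{q}\ne\mathbf{p}$ and $\mathbf{p}^TM\mathbf{p}=\mathbf{q}^TM\mathbf{p}$, then $\mathbf{p}^TM\mathbf{q}>\mathbf{q}^TM\mathbf{q}$. $M\in\mathbb{R}^{(n+1)\times(n+1)}$ is conditionally negative definite if $\mathbf{y}^TM\mathbf{y}<0$ for all nonzero $\mathbf{y}\in\mathbb{R}^{n+1}$ with $\sum_j y_j=0$. *)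

theory Defs
  imports Main "HOL-Library.FuncSet" Complex_Main
begin

text \<open>Vectors in R^(n+1) are functions nat => real
  (only indices 0..n matter); matrices are functions nat => nat => real.
  Mixed strategies are taken to vanish outside 0..n so that uniqueness is meaningful.\<close>

definition qform :: "nat \<Rightarrow> (nat \<Rightarrow> real) \<Rightarrow> (nat \<Rightarrow> nat \<Rightarrow> real) \<Rightarrow> (nat \<Rightarrow> real) \<Rightarrow> real" where
  "qform n x M y = (\<Sum>j\<le>n. \<Sum>k\<le>n. x j * M j k * y k)"

definition mixed_strategies :: "nat \<Rightarrow> (nat \<Rightarrow> real) set" where
  "mixed_strategies n = {q. (\<forall>j\<le>n. 0 \<le> q j \<and> q j \<le> 1) \<and> (\<Sum>j\<le>n. q j) = 1 \<and> (\<forall>j>n. q j = 0)}"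

definition is_ESS :: "nat \<Rightarrow> (nat \<Rightarrow> nat \<Rightarrow> real) \<Rightarrow> (nat \<Rightarrow> real) \<Rightarrow> bool" where
  "is_ESS n M p \<longleftrightarrow> p \<in> mixed_strategies n \<and>
     (\<forall>q\<in>mixed_strategies n. qform n p M p \<ge> qform n q M p) \<and>
     (\<forall>q\<in>mixed_strategies n. q \<noteq> p \<and> qform n p M p = qform n q M p \<longrightarrow>
        qform n p M q > qform n q M q)"

definition cond_neg_def :: "nat \<Rightarrow> (nat \<Rightarrow> nat \<Rightarrow> real) \<Rightarrow> bool" where
  "cond_neg_def n M \<longleftrightarrow> (\<forall>y. (\<exists>j\<le>n. y j \<noteq> 0) \<and> (\<Sum>j\<le>n. y j) = 0 \<longrightarrow> qform n y M y < 0)"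

end

theory Submission
  imports Defs
begin

lemma qform_sym: "qform n y M y = (\<Sum>j\<le>n. \<Sum>k\<le>n. y j * y k * ((M j k + M k j)/2))"
proof -
  have "qform n y M y = (\<Sum>k\<le>n. \<Sum>j\<le>n. y j * M j k * y k)"
    unfolding qform_def by (rule sum.swap)
  hence "2 * qform n y M y = (\<Sum>j\<le>n. \<Sum>k\<le>n. y j * M j k * y k) + (\<Sum>j\<le>n. \<Sum>k\<le>n. y k * M k j * y j)"
    unfolding qform_def by simp
  also have "\<dots> = (\<Sum>j\<le>n. \<Sum>k\<le>n. 2 * (y j * y k * ((M j k + M k j)/2)))"
    unfolding sum.distrib[symmetric] by (intro sum.cong refl) (simp add: field_simps)
  finally have h: "2 * qform n y M y = (\<Sum>j\<le>n. \<Sum>k\<le>n. 2 * (y j * y k * ((M j k + M k j)/2)))" .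
  have "(\<Sum>j\<le>n. \<Sum>k\<le>n. 2 * (y j * y k * ((M j k + M k j)/2))) = 2 * (\<Sum>j\<le>n. \<Sum>k\<le>n. y j * y k * ((M j k + M k j)/2))"
    by (simp add: sum_distrib_left)
  with h show ?thesis by simp
qed

lemma sq_sum: "(\<Sum>i\<in>A. \<Sum>j\<in>A. (c::real) * (f i * f j)) = c * (sum f A)^2"
proof -
  have "(sum f A)^2 = (\<Sum>i\<in>A. \<Sum>j\<in>A. f i * f j)" by (simp add: power2_eq_square sum_product)
  then show ?thesis by (simp add: sum_distrib_left)
qed

definition Mat :: "(nat \<Rightarrow> real) \<Rightarrow> (nat \<Rightarrow> real) \<Rightarrow> (nat \<Rightarrow> real) \<Rightarrow> nat \<Rightarrow> nat \<Rightarrow> real" where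
  "Mat c v \<rho> = (\<lambda>j k. if j > k then v k - c k else if j = k then v k / 2 - c k - \<rho> k else - c j)"

lemma Mat_symm: "(Mat c v \<rho> j k + Mat c v \<rho> k j)/2 = (v (min j k)/2 - c (min j k)) - (if j = k then \<rho> j else 0)"
  by (auto simp: Mat_def min_def field_simps)

lemma telesc:
  fixes w :: "nat \<Rightarrow> real"
  assumes "j \<le> n" "k \<le> n"
  shows "w (min j k) = w 0 + (\<Sum>i<n. (if i < j \<and> i < k then w (Suc i) - w i else 0))"
proof -
  have "(\<Sum>i<n. (if i < j \<and> i < k then w (Suc i) - w i else 0)) = (\<Sum>i\<in>{..<n} \<inter> {i. i < min j k}. w (Suc i) - w i)"
    by (simp add: sum.inter_restrict)
  also have "{..<n} \<inter> {i. i < min j k} = {..<min j k}" using assms by auto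
  also have "(\<Sum>i\<in>{..<min j k}. w (Suc i) - w i) = w (min j k) - w 0" by (rule sum_lessThan_telescope)
  finally show ?thesis by simp
qed

lemma quad_decomp:
  fixes w :: "nat \<Rightarrow> real"
  shows "(\<Sum>j\<le>n. \<Sum>k\<le>n. y j * y k * w (min j k)) =
     w 0 * (\<Sum>j\<le>n. y j)^2 + (\<Sum>i<n. (w (Suc i) - w i) * (\<Sum>j\<le>n. if i < j then y j else 0)^2)"
proof -
  have "(\<Sum>j\<le>n. \<Sum>k\<le>n. y j * y k * w (min j k)) =
     (\<Sum>j\<le>n. \<Sum>k\<le>n. y j * y k * w 0 + (\<Sum>i<n. (w (Suc i) - w i) * ((if i < j then y j else 0) * (if i < k then y k else 0))))"
  proof (intro sum.cong refl)
    fix j k assume "j \<in> {..n}" "k \<in> {..n}"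
    hence "w (min j k) = w 0 + (\<Sum>i<n. (if i < j \<and> i < k then w (Suc i) - w i else 0))"
      by (intro telesc) auto
    also have "(\<Sum>i<n. (if i < j \<and> i < k then w (Suc i) - w i else 0)) * (y j * y k) =
       (\<Sum>i<n. (w (Suc i) - w i) * ((if i < j then y j else 0) * (if i < k then y k else 0)))"
      by (simp add: sum_distrib_right) (intro sum.cong refl, auto)
    ultimately show "y j * y k * w (min j k) = y j * y k * w 0 + (\<Sum>i<n. (w (Suc i) - w i) * ((if i < j then y j else 0) * (if i < k then y k else 0)))"
      by (simp add: algebra_simps)
  qed
  also have "\<dots> = w 0 * (\<Sum>j\<le>n. y j)^2 + (\<Sum>j\<le>n. \<Sum>k\<le>n. \<Sum>i<n. (w (Suc i) - w i) * ((if i < j then y j else 0) * (if i < k then y k else 0)))"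
    by (simp add: sum.distrib power2_eq_square sum_product sum_distrib_left algebra_simps)
  also have "(\<Sum>j\<le>n. \<Sum>k\<le>n. \<Sum>i<n. (w (Suc i) - w i) * ((if i < j then y j else 0) * (if i < k then y k else 0)))
     = (\<Sum>i<n. (w (Suc i) - w i) * (\<Sum>j\<le>n. if i < j then y j else 0)^2)"
    apply (subst sum.swap)
    apply (subst (2) sum.swap)
    apply (rule sum.cong[OF refl])
    apply (rule sq_sum)
    done
  finally show ?thesis .
qed

lemma Tsplit:
  fixes y :: "nat \<Rightarrow> real"
  assumes "i < n"
  shows "(\<Sum>j\<le>n. if i < j then y j else 0) = y (Suc i) + (\<Sum>j\<le>n. if Suc i < j then y j else 0)"
proof -
  have "(\<Sum>j\<le>n. if i < j then y j else 0) = (\<Sum>j\<le>n. (if j = Suc i then y j else 0) + (if Suc i < j then y j else 0))"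
    by (intro sum.cong refl) auto
  also have "\<dots> = y (Suc i) + (\<Sum>j\<le>n. if Suc i < j then y j else 0)"
    using assms by (simp add: sum.distrib)
  finally show ?thesis .
qed

lemma Tsplit0:
  fixes y :: "nat \<Rightarrow> real"
  shows "(\<Sum>j\<le>n. y j) = y 0 + (\<Sum>j\<le>n. if 0 < j then y j else 0)"
proof -
  have "(\<Sum>j\<le>n. y j) = (\<Sum>j\<le>n. (if j = 0 then y j else 0) + (if 0 < j then y j else 0))"
    by (intro sum.cong refl) auto
  also have "\<dots> = y 0 + (\<Sum>j\<le>n. if 0 < j then y j else 0)"
    by (simp add: sum.distrib)
  finally show ?thesis .
qed

lemma Mat_cnd:
  assumes cinc: "\<And>k. k < n \<Longrightarrow> c k < c (Suc k)"
    and vdec: "\<And>k. k < n \<Longrightarrow> v k \<ge> v (Suc k)"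
    and rho: "\<And>k. k \<le> n \<Longrightarrow> 0 \<le> \<rho> k"
  shows "cond_neg_def n (Mat c v \<rho>)"
  unfolding cond_neg_def_def
proof (intro allI impI, elim conjE)
  fix y :: "nat \<Rightarrow> real"
  assume nz: "\<exists>j\<le>n. y j \<noteq> 0" and s0: "(\<Sum>j\<le>n. y j) = 0"
  define w where "w i = v i / 2 - c i" for i
  define T where "T i = (\<Sum>j\<le>n. if i < j then y j else 0)" for i
  have "qform n y (Mat c v \<rho>) y = (\<Sum>j\<le>n. \<Sum>k\<le>n. y j * y k * w (min j k) - y j * y k * (if j = k then \<rho> j else 0))"
    unfolding qform_sym Mat_symm w_def by (simp add: algebra_simps)
  also have "\<dots> = (\<Sum>j\<le>n. \<Sum>k\<le>n. y j * y k * w (min j k)) - (\<Sum>j\<le>n. y j * y j * \<rho> j)"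
  proof -
    have "(\<Sum>j\<le>n. \<Sum>k\<le>n. y j * y k * (if j = k then \<rho> j else 0)) = (\<Sum>j\<le>n. y j * y j * \<rho> j)"
    proof (intro sum.cong refl)
      fix j assume "j \<in> {..n}"
      have "(\<Sum>k\<le>n. y j * y k * (if j = k then \<rho> j else 0)) = (\<Sum>k\<le>n. if j = k then y j * y j * \<rho> j else 0)"
        by (intro sum.cong refl) auto
      also have "\<dots> = y j * y j * \<rho> j" using \<open>j \<in> {..n}\<close> by simp
      finally show "(\<Sum>k\<le>n. y j * y k * (if j = k then \<rho> j else 0)) = y j * y j * \<rho> j" .
    qed
    then show ?thesis by (simp only: sum_subtractf)
  qed
  also have "(\<Sum>j\<le>n. \<Sum>k\<le>n. y j * y k * w (min j k)) = (\<Sum>i<n. (w (Suc i) - w i) * (T i)^2)"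
    unfolding quad_decomp T_def s0 by simp
  finally have eq: "qform n y (Mat c v \<rho>) y = (\<Sum>i<n. (w (Suc i) - w i) * (T i)^2) - (\<Sum>j\<le>n. y j * y j * \<rho> j)" .
  have rpos: "(\<Sum>j\<le>n. y j * y j * \<rho> j) \<ge> 0"
    by (intro sum_nonneg) (simp add: rho)
  have dneg: "w (Suc i) - w i < 0" if "i < n" for i
    using cinc[OF that] vdec[OF that] unfolding w_def by simp
  have "\<exists>i<n. T i \<noteq> 0"
  proof (rule ccontr)
    assume "\<not> ?thesis"
    hence T0: "\<And>i. i < n \<Longrightarrow> T i = 0" by auto
    have Tn: "T n = 0" unfolding T_def by simp
    have "y j = 0" if "j \<le> n" for j
    proof (cases j)
      case 0
      have "T 0 = 0" using T0 Tn by (cases "n = 0") auto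
      then show ?thesis using Tsplit0[of y n] s0 0 unfolding T_def by simp
    next
      case (Suc i)
      hence "i < n" using that by simp
      hence "T i = y (Suc i) + T (Suc i)" unfolding T_def by (rule Tsplit)
      moreover have "T (Suc i) = 0" using T0 Tn \<open>i < n\<close> by (cases "Suc i = n") auto
      ultimately show ?thesis using T0[OF \<open>i < n\<close>] Suc by simp
    qed
    with nz show False by auto
  qed
  then obtain i0 where i0: "i0 < n" "T i0 \<noteq> 0" by auto
  have "(\<Sum>i<n. (w (Suc i) - w i) * (T i)^2) < (\<Sum>i<n. 0)"
  proof (rule sum_strict_mono_ex1)
    show "\<forall>x\<in>{..<n}. (w (Suc x) - w x) * (T x)\<^sup>2 \<le> 0"
      using dneg by (meson lessThan_iff less_imp_le mult_nonpos_nonneg zero_le_power2)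
    show "\<exists>a\<in>{..<n}. (w (Suc a) - w a) * (T a)\<^sup>2 < 0"
      using i0 dneg[OF i0(1)] by (intro bexI[of _ i0]) (auto intro: mult_neg_pos)
  qed simp
  then show "qform n y (Mat c v \<rho>) y < 0" using eq rpos by simp
qed

lemma qform_diff1: "qform n (\<lambda>i. a i - b i) M y = qform n a M y - qform n b M y"
  unfolding qform_def by (simp add: algebra_simps sum_subtractf)

lemma qform_diff2: "qform n x M (\<lambda>i. a i - b i) = qform n x M a - qform n x M b"
  unfolding qform_def by (simp add: algebra_simps sum_subtractf)

lemma ne_ess:
  assumes cnd: "cond_neg_def n M" and p: "p \<in> mixed_strategies n"
    and ne: "\<forall>q\<in>mixed_strategies n. qform n q M p \<le> qform n p M p"
    and q: "q \<in> mixed_strategies n" and qp: "q \<noteq> p"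
  shows "qform n p M q > qform n q M q"
proof -
  define y where "y i = q i - p i" for i
  have "\<exists>j\<le>n. y j \<noteq> 0"
  proof (rule ccontr)
    assume "\<not> ?thesis"
    hence "q j = p j" for j using p q unfolding y_def mixed_strategies_def
      by (cases "j \<le> n") auto
    with qp show False by auto
  qed
  moreover have "(\<Sum>j\<le>n. y j) = 0" using p q unfolding y_def mixed_strategies_def
    by (simp add: sum_subtractf)
  ultimately have neg: "qform n y M y < 0" using cnd unfolding cond_neg_def_def by blast
  have "qform n y M y = qform n q M q - qform n q M p - qform n p M q + qform n p M p"
    unfolding y_def qform_diff1 qform_diff2 by simp
  with neg ne q show ?thesis by force
qed

lemma ne_unique:
  assumes cnd: "cond_neg_def n M" and p: "p \<in> mixed_strategies n"
    and ne: "\<forall>q\<in>mixed_strategies n. qform n q M p \<le> qform n p M p"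
  shows "\<exists>!p. is_ESS n M p"
proof
  show "is_ESS n M p" unfolding is_ESS_def using p ne ne_ess[OF cnd p ne] by auto
next
  fix p' assume "is_ESS n M p'"
  hence p': "p' \<in> mixed_strategies n" "\<forall>q\<in>mixed_strategies n. qform n q M p' \<le> qform n p' M p'"
    unfolding is_ESS_def by auto
  show "p' = p"
  proof (rule ccontr)
    assume "p' \<noteq> p"
    with ne_ess[OF cnd p ne p'(1)] have "qform n p M p' > qform n p' M p'" by simp
    with p'(2) p show False by force
  qed
qed

definition U :: "nat \<Rightarrow> (nat \<Rightarrow> nat \<Rightarrow> real) \<Rightarrow> (nat \<Rightarrow> real) \<Rightarrow> nat \<Rightarrow> real" where
  "U n M x j = (\<Sum>k\<le>n. M j k * x k)"

definition G :: "nat \<Rightarrow> (nat \<Rightarrow> nat \<Rightarrow> real) \<Rightarrow> (nat \<Rightarrow> real) \<Rightarrow> nat \<Rightarrow> real" where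
  "G n M x j = U n M x j - U n M x n"

fun build :: "nat \<Rightarrow> (nat \<Rightarrow> nat \<Rightarrow> real) \<Rightarrow> (nat \<Rightarrow> real) \<Rightarrow> nat \<Rightarrow> nat \<Rightarrow> real" where
  "build n M a 0 = (\<lambda>i. if i = n then 1 else 0)"
| "build n M a (Suc m) = (let y = build n M a m in y(n - Suc m := max 0 (G n M y (n - Suc m) / a (n - Suc m))))"

lemma G_alt: "G n M x j = (\<Sum>k\<le>n. (M j k - M n k) * x k)"
  unfolding G_def U_def by (simp add: algebra_simps sum_subtractf)

lemma G_local:
  assumes "j \<le> n" "\<And>i. j \<le> i \<Longrightarrow> i \<le> n \<Longrightarrow> x i = x' i"
  shows "G n (Mat c v \<rho>) x j = G n (Mat c v \<rho>) x' j"
  unfolding G_alt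
proof (intro sum.cong refl)
  fix k assume "k \<in> {..n}"
  show "(Mat c v \<rho> j k - Mat c v \<rho> n k) * x k = (Mat c v \<rho> j k - Mat c v \<rho> n k) * x' k"
  proof (cases "k < j")
    case True
    with assms(1) show ?thesis by (simp add: Mat_def)
  next
    case False
    with assms \<open>k \<in> {..n}\<close> show ?thesis by simp
  qed
qed

lemma G_upd:
  assumes "j < n"
  shows "G n (Mat c v \<rho>) (x(j := t)) j = G n (Mat c v \<rho>) (x(j := 0)) j - (v j / 2 + \<rho> j) * t"
proof -
  let ?M = "Mat c v \<rho>"
  have "G n ?M (x(j := t)) j - G n ?M (x(j := 0)) j = (\<Sum>k\<le>n. (?M j k - ?M n k) * ((x(j := t)) k - (x(j := 0)) k))"
    unfolding G_alt sum_subtractf[symmetric] by (intro sum.cong refl) (simp add: algebra_simps)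
  also have "\<dots> = (\<Sum>k\<le>n. if k = j then (?M j j - ?M n j) * t else 0)"
    by (intro sum.cong refl) auto
  also have "\<dots> = (?M j j - ?M n j) * t" using assms by simp
  also have "\<dots> = - (v j / 2 + \<rho> j) * t" using assms by (simp add: Mat_def algebra_simps)
  finally show ?thesis by (simp add: algebra_simps)
qed

lemma build_inv:
  assumes apos: "\<And>j. j < n \<Longrightarrow> v j / 2 + \<rho> j > 0"
  shows "m \<le> n \<Longrightarrow>
    (\<forall>i. (i < n - m \<or> n < i) \<longrightarrow> build n (Mat c v \<rho>) (\<lambda>j. v j / 2 + \<rho> j) m i = 0) \<and>
    (\<forall>i. 0 \<le> build n (Mat c v \<rho>) (\<lambda>j. v j / 2 + \<rho> j) m i) \<and>
    build n (Mat c v \<rho>) (\<lambda>j. v j / 2 + \<rho> j) m n = 1 \<and>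
    (\<forall>j. n - m \<le> j \<and> j \<le> n \<longrightarrow> G n (Mat c v \<rho>) (build n (Mat c v \<rho>) (\<lambda>j. v j / 2 + \<rho> j) m) j \<le> 0 \<and>
        (build n (Mat c v \<rho>) (\<lambda>j. v j / 2 + \<rho> j) m j > 0 \<longrightarrow> G n (Mat c v \<rho>) (build n (Mat c v \<rho>) (\<lambda>j. v j / 2 + \<rho> j) m) j = 0))"
proof (induction m)
  case 0
  then show ?case by (auto simp: G_def)
next
  case (Suc m)
  let ?M = "Mat c v \<rho>" and ?a = "\<lambda>j. v j / 2 + \<rho> j"
  define y where "y = build n ?M ?a m"
  define j where "j = n - Suc m"
  define t where "t = max 0 (G n ?M y j / ?a j)"
  have jn: "j < n" "j = n - m - 1" using Suc.prems unfolding j_def by auto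
  have IH: "\<forall>i. (i < n - m \<or> n < i) \<longrightarrow> y i = 0" "\<forall>i. 0 \<le> y i" "y n = 1"
     "\<forall>j. n - m \<le> j \<and> j \<le> n \<longrightarrow> G n ?M y j \<le> 0 \<and> (y j > 0 \<longrightarrow> G n ?M y j = 0)"
    using Suc unfolding y_def by auto
  have b: "build n ?M ?a (Suc m) = y(j := t)" unfolding y_def j_def t_def by (simp add: Let_def)
  have jlt: "j < n - m" using Suc.prems unfolding j_def by simp
  hence yj: "y j = 0" using IH(1) by auto
  hence yj0: "y(j := 0) = y" by auto
  have aj: "?a j > 0" using apos jn by simp
  have Gj: "G n ?M (y(j := t)) j = G n ?M y j - ?a j * t"
    using G_upd[OF jn(1), of c v \<rho> y t] yj0 by simp
  have t0: "t \<ge> 0" unfolding t_def by simp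
  have Gnew: "G n ?M (y(j := t)) j \<le> 0 \<and> ((y(j := t)) j > 0 \<longrightarrow> G n ?M (y(j := t)) j = 0)"
  proof (cases "G n ?M y j \<le> 0")
    case True
    hence "G n ?M y j / ?a j \<le> 0" using aj by (simp add: divide_nonpos_pos)
    hence "t = 0" unfolding t_def by simp
    then show ?thesis using Gj True by simp
  next
    case False
    hence "t = G n ?M y j / ?a j" unfolding t_def using aj by simp
    then show ?thesis using Gj aj by simp
  qed
  have Gold: "G n ?M (y(j := t)) j' = G n ?M y j'" if "n - m \<le> j'" "j' \<le> n" for j'
    using that jlt by (intro G_local) auto
  show ?case unfolding b
  proof (intro conjI allI impI)
    fix i assume "i < n - Suc m \<or> n < i"
    then show "(y(j := t)) i = 0" using IH(1) jn by auto
  next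
    fix i show "0 \<le> (y(j := t)) i" using IH(2) t0 by simp
  next
    show "(y(j := t)) n = 1" using IH(3) jn by simp
  next
    fix j' assume "n - Suc m \<le> j' \<and> j' \<le> n"
    then consider "j' = j" | "n - m \<le> j'" "j' \<le> n" using jn by linarith
    then show "G n ?M (y(j := t)) j' \<le> 0"
      by cases (use Gnew Gold IH(4) in auto)
  next
    fix j' assume "n - Suc m \<le> j' \<and> j' \<le> n" "0 < (y(j := t)) j'"
    then consider "j' = j" | "n - m \<le> j'" "j' \<le> n" "j' \<noteq> j" using jn by linarith
    then show "G n ?M (y(j := t)) j' = 0"
      by cases (use Gnew Gold IH(4) \<open>0 < (y(j := t)) j'\<close> in auto)
  qed
qed

lemma qform_U: "qform n q M p = (\<Sum>j\<le>n. q j * U n M p j)"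
  unfolding qform_def U_def by (simp add: sum_distrib_left mult.assoc)

lemma Mat_ne:
  assumes apos: "\<And>j. j < n \<Longrightarrow> v j / 2 + \<rho> j > 0"
  shows "\<exists>p\<in>mixed_strategies n. \<forall>q\<in>mixed_strategies n. qform n q (Mat c v \<rho>) p \<le> qform n p (Mat c v \<rho>) p"
proof -
  let ?M = "Mat c v \<rho>"
  define x where "x = build n ?M (\<lambda>j. v j / 2 + \<rho> j) n"
  have X: "\<forall>i. n < i \<longrightarrow> x i = 0" "\<forall>i. 0 \<le> x i" "x n = 1"
     "\<forall>j. j \<le> n \<longrightarrow> G n ?M x j \<le> 0 \<and> (x j > 0 \<longrightarrow> G n ?M x j = 0)"
    using build_inv[OF apos, where m=n] unfolding x_def by auto
  define s where "s = (\<Sum>i\<le>n. x i)"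
  have "x n \<le> s" unfolding s_def by (rule member_le_sum) (use X in auto)
  hence s1: "s \<ge> 1" using X by simp
  define p where "p i = x i / s" for i
  have xs: "x i \<le> s" if "i \<le> n" for i unfolding s_def by (rule member_le_sum) (use X that in auto)
  have pm: "p \<in> mixed_strategies n"
    unfolding mixed_strategies_def p_def
  proof (intro CollectI conjI allI impI)
    fix j assume "j \<le> n" then show "0 \<le> x j / s" "x j / s \<le> 1" using X s1 xs by auto
  next
    show "(\<Sum>j\<le>n. x j / s) = 1" using s1 unfolding s_def[symmetric] sum_divide_distrib[symmetric] by simp
  next
    fix j assume "n < j" then show "x j / s = 0" using X by simp
  qed
  have Up: "U n ?M p j = U n ?M x j / s" for j
    unfolding U_def p_def by (simp add: sum_divide_distrib)
  have le: "U n ?M p j \<le> U n ?M p n" if "j \<le> n" for j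
    using X(4) that s1 unfolding Up G_def by (auto intro: divide_right_mono)
  have eq: "p j * U n ?M p j = p j * U n ?M p n" if "j \<le> n" for j
  proof (cases "x j > 0")
    case True
    then show ?thesis using X(4) that unfolding Up G_def by auto
  next
    case False
    then have "x j = 0" using X(2)[rule_format, of j] by linarith
    then show ?thesis unfolding p_def by simp
  qed
  have "qform n p ?M p = U n ?M p n"
  proof -
    have "qform n p ?M p = (\<Sum>j\<le>n. p j * U n ?M p n)" unfolding qform_U using eq by (intro sum.cong) auto
    also have "\<dots> = U n ?M p n" using pm unfolding mixed_strategies_def by (simp add: sum_distrib_right[symmetric])
    finally show ?thesis .
  qed
  moreover have "qform n q ?M p \<le> U n ?M p n" if q: "q \<in> mixed_strategies n" for q
  proof -
    have "qform n q ?M p \<le> (\<Sum>j\<le>n. q j * U n ?M p n)" unfolding qform_U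
      using q le unfolding mixed_strategies_def by (intro sum_mono mult_left_mono) auto
    also have "\<dots> = U n ?M p n" using q unfolding mixed_strategies_def by (simp add: sum_distrib_right[symmetric])
    finally show ?thesis .
  qed
  ultimately show ?thesis using pm by (intro bexI[of _ p]) auto
qed

lemma Mat_main:
  assumes cinc: "\<And>k. k < n \<Longrightarrow> c k < c (Suc k)"
    and vdec: "\<And>k. k < n \<Longrightarrow> v k \<ge> v (Suc k)" and vpos: "v n > 0"
    and rho: "\<And>k. k \<le> n \<Longrightarrow> 0 \<le> \<rho> k"
  shows "(\<exists>!p. is_ESS n (Mat c v \<rho>) p) \<and> cond_neg_def n (Mat c v \<rho>)"
proof -
  have vge: "v j \<ge> v n" if "j \<le> n" for j
    using that
  proof (induction "n - j" arbitrary: j)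
    case 0 then show ?case by simp
  next
    case (Suc d)
    then have "v (Suc j) \<ge> v n" by simp
    moreover have "v j \<ge> v (Suc j)" using vdec Suc by simp
    ultimately show ?case by simp
  qed
  have apos: "v j / 2 + \<rho> j > 0" if "j < n" for j
    using vge[of j] rho[of j] vpos that by simp
  have cnd: "cond_neg_def n (Mat c v \<rho>)" using Mat_cnd cinc vdec rho by blast
  obtain p where "p \<in> mixed_strategies n" "\<forall>q\<in>mixed_strategies n. qform n q (Mat c v \<rho>) p \<le> qform n p (Mat c v \<rho>) p"
    using Mat_ne[of n v \<rho> c] apos by blast
  with ne_unique[OF cnd] cnd show ?thesis by blast
qed

theorem lemma5p1:
  fixes n :: nat and c v :: "nat \<Rightarrow> real"
  assumes n: "n \<ge> 1"
    and c0: "0 \<le> c 0" and cinc: "\<And>k. k < n \<Longrightarrow> c k < c (Suc k)"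
    and vdec: "\<And>k. k < n \<Longrightarrow> v k \<ge> v (Suc k)" and vpos: "v n > 0"
  shows "(let A = (\<lambda>j k. if j > k then v k - c k else if j = k then v k / 2 - c k else - c j)
          in (\<exists>!p. is_ESS n A p) \<and> cond_neg_def n A) \<and>
     (\<forall>\<rho> :: nat \<Rightarrow> real. (\<forall>k\<le>n. 0 \<le> \<rho> k \<and> \<rho> k < v k / 2) \<longrightarrow>
          (let B = (\<lambda>j k. if j > k then v k - c k else if j = k then v k / 2 - c k - \<rho> k else - c j)
           in (\<exists>!p. is_ESS n B p) \<and> cond_neg_def n B))"
proof (intro conjI allI impI)
  have "(\<lambda>j k. if j > k then v k - c k else if j = k then v k / 2 - c k else - c j) = Mat c v (\<lambda>_. 0)"
    by (auto simp: Mat_def fun_eq_iff)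
  then show "let A = (\<lambda>j k. if j > k then v k - c k else if j = k then v k / 2 - c k else - c j)
          in (\<exists>!p. is_ESS n A p) \<and> cond_neg_def n A"
    using Mat_main[of n c v "\<lambda>_. 0"] cinc vdec vpos by (simp add: Let_def)
next
  fix \<rho> :: "nat \<Rightarrow> real" assume r: "\<forall>k\<le>n. 0 \<le> \<rho> k \<and> \<rho> k < v k / 2"
  have "(\<lambda>j k. if j > k then v k - c k else if j = k then v k / 2 - c k - \<rho> k else - c j) = Mat c v \<rho>"
    by (auto simp: Mat_def fun_eq_iff)
  then show "let B = (\<lambda>j k. if j > k then v k - c k else if j = k then v k / 2 - c k - \<rho> k else - c j)
           in (\<exists>!p. is_ESS n B p) \<and> cond_neg_def n B"
    using Mat_main[of n c v \<rho>] cinc vdec vpos r by (simp add: Let_def)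
qed

end
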